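(* Let $\mathcal G$ be a random bipartite graph with parts $V_1$, $V_2$, $|V_1|=n$, $|V_2|=m$, $N=n+m$, where each pair with one vertex in $V_1$ and the other in $V_2$ is an edge independently with probability $p=(b\log N+c)/\sqrt{mn}$, where $b>0$ and $0\le c\le\log N$. Let $\gamma=n/m\ge1$ and $\kappa=\gamma^{1/4}$. If $b\ge\kappa^2$, then as $n,m\to\infty$, with probability at least $1-2e^{-\kappa^{-2}c}-O(N^{-2b})$ the graph $\mathcal G$ has exactly one connected component. Consequently, $\mathcal G$ is connected with probability tending to $1$ as $c\to\infty$.
   Context: $\log$ is the natural logarithm. *)

theory Defs
  imports Complex_Main
begin

text \<open>Bipartite graph with parts V1 = Inl ` {..<n} and V2 = Inr ` {..<m}.
  An edge set is a subset of the possible pairs {..<n} \<times> {..<m}.\<close>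

definition bip_pairs :: "nat \<Rightarrow> nat \<Rightarrow> (nat \<times> nat) set" where
  "bip_pairs n m = {..<n} \<times> {..<m}"

definition bip_vertices :: "nat \<Rightarrow> nat \<Rightarrow> (nat + nat) set" where
  "bip_vertices n m = Inl ` {..<n} \<union> Inr ` {..<m}"

definition bip_adj :: "(nat \<times> nat) set \<Rightarrow> ((nat + nat) \<times> (nat + nat)) set" where
  "bip_adj E = {(Inl i, Inr j) | i j. (i, j) \<in> E} \<union> {(Inr j, Inl i) | i j. (i, j) \<in> E}"

definition bip_components :: "nat \<Rightarrow> nat \<Rightarrow> (nat \<times> nat) set \<Rightarrow> (nat + nat) set set" where
  "bip_components n m E = (\<lambda>v. (bip_adj E)\<^sup>* `` {v}) ` bip_vertices n m"

definition bip_one_component_prob :: "nat \<Rightarrow> nat \<Rightarrow> real \<Rightarrow> real" where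
  "bip_one_component_prob n m p =
     (\<Sum>E\<in>Pow (bip_pairs n m).
        if card (bip_components n m E) = 1
        then p ^ card E * (1 - p) ^ (n * m - card E) else 0)"

definition kappa :: "nat \<Rightarrow> nat \<Rightarrow> real" where
  "kappa n m = (real n / real m) powr (1/4)"

end

theory Submission
  imports Defs "HOL-Real_Asymp.Real_Asymp"
begin

definition cross :: "nat \<Rightarrow> nat \<Rightarrow> nat set \<Rightarrow> nat set \<Rightarrow> (nat \<times> nat) set" where
  "cross n m A B = A \<times> ({..<m} - B) \<union> ({..<n} - A) \<times> B"

definition fam :: "nat \<Rightarrow> nat \<Rightarrow> (nat set \<times> nat set) set" where
  "fam n m = {(A,B). A \<subseteq> {..<n} \<and> B \<subseteq> {..<m} \<and> 1 \<le> card A + card B \<and> 2 * (card A + card B) \<le> n + m}"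

lemma sym_bip_adj: "sym (bip_adj E)"
  unfolding bip_adj_def sym_def by blast

lemma bip_adj_closed:
  assumes "E \<subseteq> bip_pairs n m"
  shows "bip_adj E `` bip_vertices n m \<subseteq> bip_vertices n m"
  using assms unfolding bip_adj_def bip_vertices_def bip_pairs_def by auto

lemma comp_sub:
  assumes "E \<subseteq> bip_pairs n m" "v \<in> bip_vertices n m"
  shows "(bip_adj E)\<^sup>* `` {v} \<subseteq> bip_vertices n m"
proof -
  have "(bip_adj E)\<^sup>* `` bip_vertices n m = bip_vertices n m"
    by (rule Image_closed_trancl[OF bip_adj_closed[OF assms(1)]])
  thus ?thesis using assms(2) by blast
qed

lemma comps_disjoint:
  assumes "(bip_adj E)\<^sup>* `` {v} \<noteq> (bip_adj E)\<^sup>* `` {w}"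
  shows "(bip_adj E)\<^sup>* `` {v} \<inter> (bip_adj E)\<^sup>* `` {w} = {}"
proof (rule ccontr)
  let ?R = "(bip_adj E)\<^sup>*"
  have s: "sym ?R" using sym_bip_adj sym_rtrancl by blast
  assume "?R `` {v} \<inter> ?R `` {w} \<noteq> {}"
  then obtain x where "(v,x) \<in> ?R" "(w,x) \<in> ?R" by blast
  then have vw: "(v,w) \<in> ?R" using s by (meson rtrancl_trans symD)
  then have wv: "(w,v) \<in> ?R" using s by (meson symD)
  have "?R `` {v} = ?R `` {w}"
    using vw wv by (meson Image_singleton_iff rtrancl_trans subsetI subset_antisym)
  thus False using assms by simp
qed

lemma card_AB:
  assumes "K \<subseteq> bip_vertices n m"
  shows "card K = card {i\<in>{..<n}. Inl i \<in> K} + card {j\<in>{..<m}. Inr j \<in> K}"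
proof -
  have "K = Inl ` {i\<in>{..<n}. Inl i \<in> K} \<union> Inr ` {j\<in>{..<m}. Inr j \<in> K}"
    using assms unfolding bip_vertices_def by auto
  moreover have "card (Inl ` {i\<in>{..<n}. Inl i \<in> K} \<union> Inr ` {j\<in>{..<m}. Inr j \<in> K})
     = card {i\<in>{..<n}. Inl i \<in> K} + card {j\<in>{..<m}. Inr j \<in> K}"
    by (subst card_Un_disjoint) (auto simp: card_image)
  ultimately show ?thesis by simp
qed

lemma exists_closed:
  assumes E: "E \<subseteq> bip_pairs n m" and n: "n \<ge> 1"
    and c: "card (bip_components n m E) \<noteq> 1"
  shows "\<exists>X\<in>fam n m. E \<inter> cross n m (fst X) (snd X) = {}"
proof -
  let ?R = "(bip_adj E)\<^sup>*"
  let ?V = "bip_vertices n m"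
  have finV: "finite ?V" unfolding bip_vertices_def by auto
  have Vne: "Inl 0 \<in> ?V" using n unfolding bip_vertices_def by auto
  have fin: "finite (bip_components n m E)" unfolding bip_components_def using finV by auto
  have ne: "bip_components n m E \<noteq> {}" unfolding bip_components_def using Vne by auto
  obtain K1 K2 where K: "K1 \<in> bip_components n m E" "K2 \<in> bip_components n m E" "K1 \<noteq> K2"
  proof -
    obtain K1 where K1: "K1 \<in> bip_components n m E" using ne by blast
    have "bip_components n m E \<noteq> {K1}" using c by auto
    then obtain K2 where "K2 \<in> bip_components n m E" "K2 \<noteq> K1" using K1 by blast
    thus ?thesis using that K1 by blast
  qed
  obtain v1 v2 where v: "v1 \<in> ?V" "v2 \<in> ?V" "K1 = ?R `` {v1}" "K2 = ?R `` {v2}"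
    using K(1,2) unfolding bip_components_def by blast
  have disj: "K1 \<inter> K2 = {}" using comps_disjoint K(3) v by metis
  have sub: "K1 \<subseteq> ?V" "K2 \<subseteq> ?V" using comp_sub[OF E] v by auto
  have "card K1 + card K2 = card (K1 \<union> K2)"
    using disj sub finV by (metis card_Un_disjoint finite_subset)
  also have "\<dots> \<le> card ?V" using sub finV by (intro card_mono) auto
  also have "card ?V = n + m"
    unfolding bip_vertices_def by (subst card_Un_disjoint) (auto simp: card_image)
  finally have cs: "card K1 + card K2 \<le> n + m" .
  obtain v where v': "v \<in> ?V" and Kv: "2 * card (?R `` {v}) \<le> n + m"
  proof (cases "card K1 \<le> card K2")
    case True thus ?thesis using that v cs by auto
  next
    case False thus ?thesis using that v cs by auto
  qed
  define K where "K = ?R `` {v}"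
  have KV: "K \<subseteq> ?V" using comp_sub[OF E v'] K_def by simp
  have vK: "v \<in> K" unfolding K_def by simp
  have clo: "y \<in> K" if "x \<in> K" "(x,y) \<in> bip_adj E" for x y
    using that unfolding K_def by (meson Image_singleton_iff rtrancl.rtrancl_into_rtrancl)
  define A where "A = {i\<in>{..<n}. Inl i \<in> K}"
  define B where "B = {j\<in>{..<m}. Inr j \<in> K}"
  have cK: "card K = card A + card B" unfolding A_def B_def by (rule card_AB[OF KV])
  have "card K \<ge> 1"
    using vK KV finV by (metis One_nat_def Suc_leI card_gt_0_iff empty_iff finite_subset)
  hence "(A,B) \<in> fam n m" unfolding fam_def using cK Kv K_def by (auto simp: A_def B_def)
  moreover have "E \<inter> cross n m A B = {}"
  proof -
    { fix i j assume ij: "(i,j) \<in> E"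
      have adj: "(Inl i, Inr j) \<in> bip_adj E" "(Inr j, Inl i) \<in> bip_adj E"
        using ij unfolding bip_adj_def by auto
      have ij2: "i < n" "j < m" using ij E unfolding bip_pairs_def by auto
      have "(i,j) \<notin> cross n m A B"
        using clo[OF _ adj(1)] clo[OF _ adj(2)] ij2 unfolding cross_def A_def B_def by auto }
    thus ?thesis by auto
  qed
  ultimately show ?thesis by (metis fst_conv snd_conv)
qed


lemma weights:
  fixes p :: real
  assumes P: "finite P" and F: "F \<subseteq> P"
  shows "(\<Sum>E\<in>{E\<in>Pow P. E \<inter> F = {}}. p ^ card E * (1-p) ^ (card P - card E)) = (1-p) ^ card F"
proof -
  let ?A = "P - F"
  have fA: "finite ?A" using P by auto
  have eq: "{E\<in>Pow P. E \<inter> F = {}} = Pow ?A" by auto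
  have cP: "card P = card F + card ?A" using F P
    by (metis card_Diff_subset card_mono diff_add_inverse finite_subset le_add_diff_inverse)
  have "(\<Sum>E\<in>Pow ?A. p ^ card E * (1-p) ^ (card P - card E))
      = (\<Sum>E\<in>Pow ?A. (1-p) ^ card F * ((\<Prod>x\<in>E. p) * (\<Prod>x\<in>?A-E. 1-p)))"
  proof (rule sum.cong[OF refl])
    fix E assume "E \<in> Pow ?A"
    hence E: "E \<subseteq> ?A" by auto
    hence fE: "finite E" using fA finite_subset by blast
    have "card (?A - E) = card ?A - card E" using E fE by (simp add: card_Diff_subset)
    moreover have "card E \<le> card ?A" using E fA card_mono by blast
    ultimately have "card P - card E = card F + card (?A - E)" using cP by simp
    thus "p ^ card E * (1-p) ^ (card P - card E) = (1-p) ^ card F * ((\<Prod>x\<in>E. p) * (\<Prod>x\<in>?A-E. 1-p))"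
      by (simp add: power_add)
  qed
  also have "\<dots> = (1-p) ^ card F * (\<Sum>E\<in>Pow ?A. (\<Prod>x\<in>E. p) * (\<Prod>x\<in>?A-E. 1-p))"
    by (simp add: sum_distrib_left)
  also have "(\<Sum>E\<in>Pow ?A. (\<Prod>x\<in>E. p) * (\<Prod>x\<in>?A-E. 1-p)) = (\<Prod>x\<in>?A. p + (1-p))"
    by (rule prod_add[OF fA, symmetric])
  finally show ?thesis using eq by simp
qed

lemma card_pairs: "card (bip_pairs n m) = n * m" unfolding bip_pairs_def by simp

lemma finite_pairs: "finite (bip_pairs n m)" unfolding bip_pairs_def by simp

lemma cross_sub: "X \<in> fam n m \<Longrightarrow> cross n m (fst X) (snd X) \<subseteq> bip_pairs n m"
  unfolding cross_def fam_def bip_pairs_def by auto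

lemma finite_fam: "finite (fam n m)"
proof -
  have "fam n m \<subseteq> Pow {..<n} \<times> Pow {..<m}" unfolding fam_def by auto
  thus ?thesis by (rule finite_subset) auto
qed

lemma prob_lower:
  fixes p :: real
  assumes n: "n \<ge> 1" and p: "0 \<le> p" "p \<le> 1"
  shows "1 - (\<Sum>X\<in>fam n m. (1-p) ^ card (cross n m (fst X) (snd X))) \<le> bip_one_component_prob n m p"
proof -
  let ?P = "bip_pairs n m"
  define w where "w E = p ^ card E * (1-p) ^ (n*m - card E)" for E :: "(nat \<times> nat) set"
  have w0: "w E \<ge> 0" for E unfolding w_def using p by simp
  have tot: "(\<Sum>E\<in>Pow ?P. w E) = 1"
    using weights[OF finite_pairs, of "{}" n m p] unfolding w_def card_pairs by (simp add: Pow_def)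
  define good where "good E = (card (bip_components n m E) = 1)" for E :: "(nat \<times> nat) set"
  have prob: "bip_one_component_prob n m p = (\<Sum>E\<in>Pow ?P. if good E then w E else 0)"
    unfolding bip_one_component_prob_def w_def good_def by simp
  have split: "(\<Sum>E\<in>Pow ?P. w E) = (\<Sum>E\<in>Pow ?P. if good E then w E else 0) + (\<Sum>E\<in>Pow ?P. if good E then 0 else w E)"
    by (subst sum.distrib[symmetric]) (rule sum.cong, auto)
  have "(\<Sum>E\<in>Pow ?P. if good E then 0 else w E)
      \<le> (\<Sum>E\<in>Pow ?P. \<Sum>X\<in>fam n m. if E \<inter> cross n m (fst X) (snd X) = {} then w E else 0)"
  proof (rule sum_mono)
    fix E assume "E \<in> Pow ?P"
    hence E: "E \<subseteq> ?P" by auto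
    show "(if good E then 0 else w E) \<le> (\<Sum>X\<in>fam n m. if E \<inter> cross n m (fst X) (snd X) = {} then w E else 0)"
    proof (cases "good E")
      case True thus ?thesis using w0 by (simp add: sum_nonneg)
    next
      case False
      then obtain X where X: "X \<in> fam n m" "E \<inter> cross n m (fst X) (snd X) = {}"
        using exists_closed[OF E n] unfolding good_def by blast
      have "w E = (if E \<inter> cross n m (fst X) (snd X) = {} then w E else 0)" using X by simp
      also have "\<dots> \<le> (\<Sum>X\<in>fam n m. if E \<inter> cross n m (fst X) (snd X) = {} then w E else 0)"
        by (rule member_le_sum[OF X(1)]) (use w0 finite_fam in auto)
      finally show ?thesis using False by simp
    qed
  qed
  also have "\<dots> = (\<Sum>X\<in>fam n m. \<Sum>E\<in>Pow ?P. if E \<inter> cross n m (fst X) (snd X) = {} then w E else 0)"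
    by (rule sum.swap)
  also have "\<dots> = (\<Sum>X\<in>fam n m. (1-p) ^ card (cross n m (fst X) (snd X)))"
  proof (rule sum.cong[OF refl])
    fix X assume X: "X \<in> fam n m"
    have "(\<Sum>E\<in>Pow ?P. if E \<inter> cross n m (fst X) (snd X) = {} then w E else 0)
        = (\<Sum>E\<in>{E\<in>Pow ?P. E \<inter> cross n m (fst X) (snd X) = {}}. w E)"
      by (subst sum.inter_filter[symmetric]) (auto simp: finite_pairs)
    also have "\<dots> = (1-p) ^ card (cross n m (fst X) (snd X))"
      using weights[OF finite_pairs cross_sub[OF X], of p] unfolding w_def card_pairs .
    finally show "(\<Sum>E\<in>Pow ?P. if E \<inter> cross n m (fst X) (snd X) = {} then w E else 0) = (1-p) ^ card (cross n m (fst X) (snd X))" .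
  qed
  finally show ?thesis using tot split prob by linarith
qed


definition ST :: "nat \<Rightarrow> nat \<Rightarrow> (nat \<times> nat) set" where
  "ST n m = {(s,t). s \<le> n \<and> t \<le> m \<and> 1 \<le> s + t \<and> 2 * (s + t) \<le> n + m}"

lemma finite_ST: "finite (ST n m)"
proof -
  have "ST n m \<subseteq> {..n} \<times> {..m}" unfolding ST_def by auto
  thus ?thesis by (rule finite_subset) auto
qed

lemma card_cross:
  assumes "A \<subseteq> {..<n}" "B \<subseteq> {..<m}"
  shows "card (cross n m A B) = card A * (m - card B) + (n - card A) * card B"
proof -
  have fA: "finite A" "finite B" using assms finite_subset by auto
  have "card (cross n m A B) = card (A \<times> ({..<m} - B)) + card (({..<n} - A) \<times> B)"
    unfolding cross_def by (rule card_Un_disjoint) (use fA in auto)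
  also have "\<dots> = card A * (m - card B) + (n - card A) * card B"
    using assms fA by (simp add: card_cartesian_product card_Diff_subset)
  finally show ?thesis .
qed

lemma group_fam:
  fixes g :: "nat \<Rightarrow> nat \<Rightarrow> real"
  shows "(\<Sum>X\<in>fam n m. g (card (fst X)) (card (snd X)))
       = (\<Sum>(s,t)\<in>ST n m. real (n choose s) * real (m choose t) * g s t)"
proof -
  let ?h = "\<lambda>X::nat set \<times> nat set. (card (fst X), card (snd X))"
  have img: "?h ` fam n m \<subseteq> ST n m"
  proof
    fix y assume "y \<in> ?h ` fam n m"
    then obtain A B where AB: "(A,B) \<in> fam n m" "y = (card A, card B)" by auto
    have "A \<subseteq> {..<n}" "B \<subseteq> {..<m}" using AB(1) unfolding fam_def by auto
    hence "card A \<le> n" "card B \<le> m" by (metis card_lessThan card_mono finite_lessThan)+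
    thus "y \<in> ST n m" using AB unfolding fam_def ST_def by auto
  qed
  have "(\<Sum>X\<in>fam n m. g (card (fst X)) (card (snd X)))
      = (\<Sum>y\<in>ST n m. \<Sum>X\<in>{X\<in>fam n m. ?h X = y}. g (card (fst X)) (card (snd X)))"
    by (rule sum.group[OF finite_fam finite_ST img, symmetric])
  also have "\<dots> = (\<Sum>(s,t)\<in>ST n m. real (n choose s) * real (m choose t) * g s t)"
  proof (rule sum.cong[OF refl], clarify)
    fix s t assume st: "(s,t) \<in> ST n m"
    have eq: "{X\<in>fam n m. ?h X = (s,t)} = {A. A \<subseteq> {..<n} \<and> card A = s} \<times> {B. B \<subseteq> {..<m} \<and> card B = t}"
      using st unfolding fam_def ST_def by auto
    have "(\<Sum>X\<in>{X\<in>fam n m. ?h X = (s,t)}. g (card (fst X)) (card (snd X)))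
        = (\<Sum>X\<in>{X\<in>fam n m. ?h X = (s,t)}. g s t)"
      by (rule sum.cong) auto
    also have "\<dots> = real (card {X\<in>fam n m. ?h X = (s,t)}) * g s t" by simp
    also have "card {X\<in>fam n m. ?h X = (s,t)} = (n choose s) * (m choose t)"
      unfolding eq by (simp add: card_cartesian_product n_subsets)
    finally show "(\<Sum>X\<in>{X\<in>fam n m. ?h X = (s,t)}. g (card (fst X)) (card (snd X)))
        = real (n choose s) * real (m choose t) * g s t" by simp
  qed
  finally show ?thesis .
qed

lemma prob_lower2:
  fixes p :: real
  assumes n: "n \<ge> 1" and p: "0 \<le> p" "p \<le> 1"
  shows "1 - (\<Sum>(s,t)\<in>ST n m. real (n choose s) * real (m choose t) * (1-p) ^ (s * (m - t) + (n - s) * t))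
     \<le> bip_one_component_prob n m p"
proof -
  have "(\<Sum>X\<in>fam n m. (1-p) ^ card (cross n m (fst X) (snd X)))
     = (\<Sum>X\<in>fam n m. (1-p) ^ (card (fst X) * (m - card (snd X)) + (n - card (fst X)) * card (snd X)))"
    by (rule sum.cong[OF refl]) (auto simp: fam_def card_cross)
  also have "\<dots> = (\<Sum>(s,t)\<in>ST n m. real (n choose s) * real (m choose t) * (1-p) ^ (s * (m - t) + (n - s) * t))"
    by (rule group_fam)
  finally show ?thesis using prob_lower[OF n p, where m=m] by simp
qed


lemma exp_partial:
  fixes x :: real
  assumes "0 \<le> x" "finite I"
  shows "(\<Sum>s\<in>I. x ^ s / fact s) \<le> exp x"
proof -
  have e: "exp x = (\<Sum>n. x ^ n / fact n)"
    using exp_converges[of x] by (simp add: sums_iff divide_inverse mult.commute)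
  have sm: "summable (\<lambda>n. x ^ n / fact n)"
    using exp_converges[of x] by (simp add: sums_iff divide_inverse mult.commute)
  show ?thesis unfolding e
    by (rule sum_le_suminf[OF sm assms(2)]) (use assms(1) in auto)
qed

lemma exp_ge_term:
  fixes x :: real
  assumes "0 \<le> x"
  shows "x ^ k / fact k \<le> exp x"
  using exp_partial[OF assms, of "{k}"] by simp

lemma fact_lower:
  fixes k :: nat
  shows "real k ^ k \<le> exp (real k) * fact k"
  using exp_ge_term[of "real k" k] by (simp add: field_simps)

lemma binom_le_real: "real (n choose s) \<le> real n ^ s / fact s"
proof -
  have "(n choose s) * fact s \<le> n ^ s" by (rule binomial_fact_pow)
  hence "real (n choose s) * fact s \<le> real n ^ s"
    by (metis of_nat_fact of_nat_le_iff of_nat_mult of_nat_power)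
  thus ?thesis by (simp add: field_simps)
qed

lemma inv_fact2:
  fixes s t :: nat
  shows "1 / (fact s * fact t) \<le> (2::real) ^ (s + t) / fact (s + t)"
proof -
  have "fact s * fact t * ((s+t) choose s) = fact (s+t)"
    using binomial_fact_lemma[of s "s+t"] by simp
  hence eq: "(fact s * fact t :: real) * real ((s+t) choose s) = fact (s+t)"
    by (metis of_nat_fact of_nat_mult)
  have le: "real ((s+t) choose s) \<le> 2 ^ (s+t)"
    by (metis binomial_le_pow2 of_nat_le_iff of_nat_numeral of_nat_power)
  have pos: "(0::real) < fact s * fact t" by simp
  have "1 / (fact s * fact t) = real ((s+t) choose s) / fact (s+t)"
    using eq pos by (simp add: field_simps)
  also have "\<dots> \<le> 2 ^ (s+t) / fact (s+t)"
    using le by (simp add: divide_right_mono)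
  finally show ?thesis .
qed

lemma cross_lower_real:
  fixes s t n m :: real
  assumes "m \<le> n" "0 \<le> s" "0 \<le> t" "0 \<le> m" "2 * (s + t) \<le> n + m"
  shows "(s + t) * m / 2 \<le> s * (m - t) + (n - s) * t"
proof (cases "4 * t \<le> m")
  case True
  have "0 \<le> s * (m/2 - 2*t)" using True assms by simp
  moreover have "0 \<le> t * (n - m/2)" using assms by simp
  moreover have "s * (m - t) + (n - s) * t - (s + t) * m / 2 = s * (m/2 - 2*t) + t * (n - m/2)"
    by (simp add: field_simps)
  ultimately show ?thesis by linarith
next
  case False
  have s: "s \<le> (n+m)/2 - t" using assms(5) by (simp add: field_simps)
  have "((n+m)/2 - t) * (m/2 - 2*t) \<le> s * (m/2 - 2*t)"
    using s False by (intro mult_right_mono_neg) auto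
  moreover have "m * m \<le> n * m" using assms by (simp add: mult_right_mono)
  moreover have "0 \<le> (t - m/2)^2" by simp
  moreover have "s * (m - t) + (n - s) * t - (s + t) * m / 2 = s * (m/2 - 2*t) + t * (n - m/2)"
    by (simp add: field_simps)
  moreover have "((n+m)/2 - t) * (m/2 - 2*t) + t * (n - m/2) = n*m/4 + m*m/4 - 2*m*t + 2*t*t"
    by (simp add: field_simps)
  moreover have "(t - m/2)^2 = t*t - m*t + m*m/4" by (simp add: power2_eq_square algebra_simps)
  ultimately show ?thesis by linarith
qed

lemma cross_lower:
  fixes s t n m :: nat
  assumes "m \<le> n" "s \<le> n" "t \<le> m" "2 * (s + t) \<le> n + m"
  shows "real (s + t) * real m / 2 \<le> real (s * (m - t) + (n - s) * t)"
proof -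
  have e: "real (s * (m - t) + (n - s) * t) = real s * (real m - real t) + (real n - real s) * real t"
    using assms by (simp add: of_nat_diff)
  have a: "real m \<le> real n" "2 * (real s + real t) \<le> real n + real m"
    using assms by simp_all
  show ?thesis unfolding e using cross_lower_real[OF a(1) _ _ _ a(2)] by simp
qed


lemma pow_exp_bound:
  fixes p :: real
  assumes "0 \<le> p" "p \<le> 1"
  shows "(1-p) ^ c \<le> exp (- p * real c)"
proof -
  have "(1-p) ^ c \<le> exp (-p) ^ c"
    by (rule power_mono) (use assms exp_ge_add_one_self[of "-p"] in auto)
  also have "\<dots> = exp (- p * real c)" by (simp add: exp_of_nat_mult[symmetric] mult.commute)
  finally show ?thesis .
qed

lemma term_small:
  fixes p :: real and n m s t :: nat
  assumes p: "0 \<le> p" "p \<le> 1" and st: "s \<le> n" "t \<le> m" and pk: "p * real (s + t) \<le> 1/4"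
  shows "real (n choose s) * real (m choose t) * (1-p) ^ (s * (m - t) + (n - s) * t)
    \<le> (exp (1/4) * real n * exp (- p * real m)) ^ s / fact s * ((exp (1/4) * real m * exp (- p * real n)) ^ t / fact t)"
proof -
  let ?c = "s * (m - t) + (n - s) * t"
  have rc0: "real ?c = real s * (real m - real t) + (real n - real s) * real t"
    using st by (simp add: of_nat_diff)
  have rc: "real ?c = real s * real m + real t * real n - 2 * real s * real t"
    unfolding rc0 by (simp add: algebra_simps)
  have st4: "4 * (real s * real t) \<le> (real s + real t)^2"
    using sum_squares_ge_zero[of "real s - real t" 0] by (simp add: power2_eq_square algebra_simps)
  have "p * (real s + real t) * (real s + real t) \<le> 1/4 * (real s + real t)"
    using pk by (intro mult_right_mono) auto
  hence pst: "2 * p * (real s * real t) \<le> (real s + real t) / 4"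
    using st4 p(1) mult_left_mono[OF st4 p(1)] by (simp add: power2_eq_square algebra_simps)
  have "- p * real ?c \<le> real s * (1/4 - p * real m) + real t * (1/4 - p * real n)"
    unfolding rc using pst by (simp add: algebra_simps)
  hence "(1-p) ^ ?c \<le> exp (real s * (1/4 - p * real m) + real t * (1/4 - p * real n))"
    using pow_exp_bound[OF p, of ?c] by (meson exp_le_cancel_iff order_trans)
  also have "\<dots> = exp (1/4 - p * real m) ^ s * exp (1/4 - p * real n) ^ t"
    by (simp add: exp_add exp_of_nat_mult[symmetric])
  finally have q: "(1-p) ^ ?c \<le> exp (1/4 - p * real m) ^ s * exp (1/4 - p * real n) ^ t" .
  have "real (n choose s) * real (m choose t) * (1-p) ^ ?c
     \<le> (real n ^ s / fact s) * (real m ^ t / fact t) * (exp (1/4 - p * real m) ^ s * exp (1/4 - p * real n) ^ t)"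
    by (intro mult_mono binom_le_real q) (use p in auto)
  also have "\<dots> = (exp (1/4) * real n * exp (- p * real m)) ^ s / fact s * ((exp (1/4) * real m * exp (- p * real n)) ^ t / fact t)"
  proof -
    have e1: "exp (1/4 - p * real m) = exp (1/4) * exp (- p * real m)" by (simp add: exp_add[symmetric])
    have e2: "exp (1/4 - p * real n) = exp (1/4) * exp (- p * real n)" by (simp add: exp_add[symmetric])
    show ?thesis unfolding e1 e2 by (simp add: power_mult_distrib)
  qed
  finally show ?thesis .
qed


lemma term_big:
  fixes p :: real and n m s t :: nat
  assumes p: "0 \<le> p" "p \<le> 1" and st: "m \<le> n" "s \<le> n" "t \<le> m" "2 * (s + t) \<le> n + m"
    and pm: "ln (real (n + m)) \<le> p * real m"
    and big: "2 * exp 2 * sqrt (real (n + m)) \<le> real (s + t)"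
    and N1: "1 \<le> n + m"
  shows "real (n choose s) * real (m choose t) * (1-p) ^ (s * (m - t) + (n - s) * t)
    \<le> exp (- sqrt (real (n + m)))"
proof -
  define N where "N = real (n + m)"
  define k where "k = s + t"
  define K where "K = real k"
  let ?c = "s * (m - t) + (n - s) * t"
  have N0: "0 < N" using N1 N_def by simp
  have sN0: "0 < sqrt N" using N0 by simp
  have big': "2 * exp 2 * sqrt N \<le> K" using big unfolding N_def K_def k_def .
  have Kpos: "0 < K"
  proof -
    have "0 < 2 * exp 2 * sqrt N" using sN0 by simp
    thus ?thesis using big' by linarith
  qed
  have sK: "sqrt N \<le> K"
  proof -
    have "1 \<le> exp (2::real)" using exp_ge_add_one_self[of 2] by linarith
    hence "1 \<le> 2 * exp (2::real)" by linarith
    hence "1 * sqrt N \<le> (2 * exp 2) * sqrt N"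
      by (rule mult_right_mono) (use sN0 in auto)
    thus ?thesis using big' by linarith
  qed
  have h1: "real (n choose s) \<le> N ^ s / fact s"
    using binom_le_real[of n s] unfolding N_def
    by (rule order_trans) (intro divide_right_mono power_mono, auto)
  have h2: "real (m choose t) \<le> N ^ t / fact t"
    using binom_le_real[of m t] unfolding N_def
    by (rule order_trans) (intro divide_right_mono power_mono, auto)
  have cl: "K * real m / 2 \<le> real ?c" unfolding K_def k_def by (rule cross_lower[OF st])
  have "K * ln N / 2 \<le> K * (p * real m) / 2"
    using pm unfolding N_def K_def by (intro divide_right_mono mult_left_mono) auto
  also have "\<dots> = p * (K * real m / 2)" by simp
  also have "\<dots> \<le> p * real ?c" using cl p by (intro mult_left_mono) auto
  finally have pc: "K * ln N / 2 \<le> p * real ?c" .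
  have "(1-p) ^ ?c \<le> exp (- (K * ln N / 2))"
  proof -
    have "exp (- p * real ?c) \<le> exp (- (K * ln N / 2))" using pc by simp
    thus ?thesis using pow_exp_bound[OF p, of ?c] by linarith
  qed
  also have "exp (- (K * ln N / 2)) = exp (- (ln N / 2)) ^ k"
    unfolding K_def by (simp add: exp_of_nat_mult[symmetric])
  also have "exp (- (ln N / 2)) = 1 / sqrt N"
  proof -
    have "exp (ln N / 2) = sqrt N" using N0 by (simp add: ln_sqrt[symmetric])
    thus ?thesis by (simp add: exp_minus inverse_eq_divide)
  qed
  finally have h3: "(1-p) ^ ?c \<le> (1 / sqrt N) ^ k" .
  have "real (n choose s) * real (m choose t) * (1-p) ^ ?c \<le> (N ^ s / fact s) * (N ^ t / fact t) * (1 / sqrt N) ^ k"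
    by (intro mult_mono h1 h2 h3) (use p N0 in auto)
  also have "\<dots> = sqrt N ^ k * (1 / (fact s * fact t))"
  proof -
    have "N ^ s * N ^ t = sqrt N ^ k * sqrt N ^ k"
    proof -
      have "sqrt N ^ k * sqrt N ^ k = (sqrt N * sqrt N) ^ k" by (simp only: power_mult_distrib)
      also have "sqrt N * sqrt N = N" using N0 by simp
      finally show ?thesis unfolding k_def by (simp add: power_add)
    qed
    thus ?thesis using sN0 by (simp add: field_simps power_one_over)
  qed
  also have "\<dots> \<le> sqrt N ^ k * (2 ^ k / fact k)"
    unfolding k_def by (intro mult_left_mono inv_fact2) (use sN0 in auto)
  also have "\<dots> \<le> sqrt N ^ k * (2 ^ k * exp K / K ^ k)"
  proof -
    have "K ^ k \<le> exp K * fact k" unfolding K_def by (rule fact_lower)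
    hence "1 / fact k \<le> exp K / K ^ k" using Kpos by (simp add: field_simps)
    thus ?thesis by (intro mult_left_mono) (use sN0 in \<open>auto simp: divide_inverse mult_left_mono\<close>)
  qed
  also have "\<dots> = (2 * exp 1 * sqrt N / K) ^ k * 1"
  proof -
    have "exp K = exp 1 ^ k" unfolding K_def by (simp add: exp_of_nat_mult[symmetric])
    thus ?thesis by (simp add: power_mult_distrib power_divide)
  qed
  also have "\<dots> \<le> exp (-1) ^ k"
  proof -
    have e2: "exp 2 = exp 1 * exp (1::real)" by (simp add: exp_add[symmetric])
    have "2 * exp 1 * sqrt N / K \<le> exp (-1)"
      using big Kpos unfolding K_def k_def N_def e2 by (simp add: exp_minus field_simps)
    thus ?thesis unfolding mult_1_right by (intro power_mono) (use sN0 Kpos in auto)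
  qed
  also have "\<dots> = exp (- K)" unfolding K_def by (simp add: exp_of_nat_mult[symmetric])
  also have "\<dots> \<le> exp (- sqrt N)"
  proof -
    have "sqrt N \<le> K" using sK by simp
    thus ?thesis by simp
  qed
  finally show ?thesis unfolding N_def .
qed


lemma sum_bound:
  fixes n m :: nat and p \<mu> T :: real
  assumes m1: "1 \<le> m" and mn: "m \<le> n" and p: "0 \<le> p" "p \<le> 1"
    and hN: "real (n + m) * exp (- p * real m) \<le> \<mu>" and hmu: "\<mu> \<le> 1/2"
    and hlog: "ln (real (n + m)) \<le> p * real m"
    and hbig: "\<And>k::nat. 1/4 < p * real k \<Longrightarrow> 2 * exp 2 * sqrt (real (n + m)) \<le> real k"
    and htail: "real (n + m) ^ 2 * exp (- sqrt (real (n + m))) \<le> T"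
  shows "(\<Sum>(s,t)\<in>ST n m. real (n choose s) * real (m choose t) * (1-p) ^ (s * (m - t) + (n - s) * t))
     \<le> 2 * \<mu> + T"
proof -
  define f where "f = (\<lambda>(s,t). real (n choose s) * real (m choose t) * (1-p) ^ (s * (m - t) + (n - s) * t))"
  define x where "x = exp (1/4) * real n * exp (- p * real m)"
  define y where "y = exp (1/4) * real m * exp (- p * real n)"
  define h where "h = (\<lambda>(s::nat,t::nat). x ^ s / fact s * (y ^ t / fact t))"
  define box where "box = {..n} \<times> {..m}"
  let ?k = "\<lambda>z::nat\<times>nat. fst z + snd z"
  have x0: "0 \<le> x" and y0: "0 \<le> y" unfolding x_def y_def by auto
  have h0: "0 \<le> h z" for z unfolding h_def using x0 y0 by (auto split: prod.splits)
  have f0: "0 \<le> f z" for z unfolding f_def using p by (auto split: prod.splits)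
  have finbox: "finite box" unfolding box_def by auto
  have STbox: "ST n m \<subseteq> box" unfolding ST_def box_def by auto
  have eN: "exp (- p * real n) \<le> exp (- p * real m)" using p mn by (simp add: mult_left_mono)
  have "(\<Sum>z\<in>ST n m. f z) = (\<Sum>z\<in>ST n m. if ?k z = 1 then f z else 0)
      + (\<Sum>z\<in>ST n m. if ?k z \<noteq> 1 \<and> p * real (?k z) \<le> 1/4 then f z else 0)
      + (\<Sum>z\<in>ST n m. if ?k z \<noteq> 1 \<and> \<not> p * real (?k z) \<le> 1/4 then f z else 0)"
    by (simp only: sum.distrib[symmetric]) (rule sum.cong, auto)
  moreover have S1: "(\<Sum>z\<in>ST n m. if ?k z = 1 then f z else 0) \<le> \<mu>"
  proof -
    have eq: "{z\<in>ST n m. ?k z = 1} = {(1,0),(0,1)}"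
      using m1 mn unfolding ST_def by (auto simp: add_is_1)
    have "(\<Sum>z\<in>ST n m. if ?k z = 1 then f z else 0) = (\<Sum>z\<in>{z\<in>ST n m. ?k z = 1}. f z)"
      by (subst sum.inter_filter[symmetric]) (auto simp: finite_ST)
    also have "\<dots> = f (1,0) + f (0,1)" unfolding eq by simp
    also have "\<dots> = real n * (1-p) ^ m + real m * (1-p) ^ n" unfolding f_def by simp
    also have "\<dots> \<le> real n * exp (- p * real m) + real m * exp (- p * real n)"
      using pow_exp_bound[OF p] by (intro add_mono mult_left_mono) auto
    also have "\<dots> \<le> real n * exp (- p * real m) + real m * exp (- p * real m)"
      using eN by (intro add_mono mult_left_mono) auto
    also have "\<dots> = real (n + m) * exp (- p * real m)" by (simp add: algebra_simps)
    finally show ?thesis using hN by linarith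
  qed
  moreover have S2: "(\<Sum>z\<in>ST n m. if ?k z \<noteq> 1 \<and> p * real (?k z) \<le> 1/4 then f z else 0) \<le> \<mu>"
  proof -
    have "(\<Sum>z\<in>ST n m. if ?k z \<noteq> 1 \<and> p * real (?k z) \<le> 1/4 then f z else 0)
        \<le> (\<Sum>z\<in>ST n m. if 2 \<le> ?k z then h z else 0)"
    proof (rule sum_mono)
      fix z assume z: "z \<in> ST n m"
      obtain s t where zst: "z = (s,t)" by fastforce
      have st: "s \<le> n" "t \<le> m" "1 \<le> s + t" using z zst unfolding ST_def by auto
      show "(if ?k z \<noteq> 1 \<and> p * real (?k z) \<le> 1/4 then f z else 0) \<le> (if 2 \<le> ?k z then h z else 0)"
      proof (cases "?k z \<noteq> 1 \<and> p * real (?k z) \<le> 1/4")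
        case True
        hence "2 \<le> ?k z" using st zst by auto
        moreover have "f z \<le> h z" unfolding f_def h_def x_def y_def zst
          using term_small[OF p st(1,2)] True zst by simp
        ultimately show ?thesis using True by simp
      next
        case False
        have "0 \<le> (if 2 \<le> ?k z then h z else 0)" using h0[of z] by simp
        thus ?thesis by (subst if_not_P[OF False])
      qed
    qed
    also have "\<dots> \<le> (\<Sum>z\<in>box. if 2 \<le> ?k z then h z else 0)"
      by (rule sum_mono2[OF finbox STbox]) (use h0 in auto)
    also have "\<dots> = (\<Sum>z\<in>box. h z) - (1 + x + y)"
    proof -
      have e3: "{z\<in>box. ?k z < 2} = {(0,0),(1,0),(0,1)}"
        using m1 mn unfolding box_def by (auto simp: less_2_cases_iff add_is_1)
      have "(\<Sum>z\<in>box. h z) = (\<Sum>z\<in>box. if 2 \<le> ?k z then h z else 0) + (\<Sum>z\<in>box. if ?k z < 2 then h z else 0)"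
        by (simp only: sum.distrib[symmetric]) (rule sum.cong, auto)
      also have "(\<Sum>z\<in>box. if ?k z < 2 then h z else 0) = (\<Sum>z\<in>{z\<in>box. ?k z < 2}. h z)"
        by (subst sum.inter_filter[symmetric]) (auto simp: finbox)
      also have "\<dots> = 1 + x + y" unfolding e3 h_def by simp
      finally show ?thesis by simp
    qed
    also have "(\<Sum>z\<in>box. h z) = (\<Sum>s\<le>n. x ^ s / fact s) * (\<Sum>t\<le>m. y ^ t / fact t)"
      unfolding box_def h_def by (simp add: sum_product sum.cartesian_product)
    also have "\<dots> \<le> exp x * exp y"
      by (intro mult_mono exp_partial) (use x0 y0 in \<open>auto intro: sum_nonneg\<close>)
    also have "exp x * exp y = exp (x + y)" by (simp add: exp_add)
    finally have A: "(\<Sum>z\<in>ST n m. if ?k z \<noteq> 1 \<and> p * real (?k z) \<le> 1/4 then f z else 0) \<le> exp (x + y) - (1 + x + y)" by simp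
    have e14: "exp (1/4::real) \<le> 2"
      using exp_bound[of "1/4"] by (simp add: power2_eq_square)
    have e12: "exp (1/2::real) \<le> 2"
      using exp_bound[of "1/2"] by (simp add: power2_eq_square)
    have xy: "x + y \<le> exp (1/4) * \<mu>"
    proof -
      have "x + y \<le> exp (1/4) * (real n * exp (- p * real m) + real m * exp (- p * real m))"
        unfolding x_def y_def using eN by (simp add: algebra_simps mult_left_mono)
      also have "\<dots> = exp (1/4) * (real (n + m) * exp (- p * real m))" by (simp add: algebra_simps)
      also have "\<dots> \<le> exp (1/4) * \<mu>" using hN by simp
      finally show ?thesis .
    qed
    have mu0: "0 \<le> \<mu>" using hN by (smt (verit) exp_gt_zero mult_nonneg_nonneg of_nat_0_le_iff)
    have xy1: "x + y \<le> 1"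
    proof -
      have "exp (1/4) * \<mu> \<le> 2 * (1/2)" using e14 hmu mu0 by (intro mult_mono) auto
      thus ?thesis using xy by simp
    qed
    have "exp (x + y) \<le> 1 + (x + y) + (x + y)^2" by (rule exp_bound) (use x0 y0 xy1 in auto)
    hence B: "exp (x + y) - (1 + x + y) \<le> (x + y)^2" by simp
    have "(x + y)^2 \<le> (exp (1/4) * \<mu>)^2" using xy x0 y0 by (intro power_mono) auto
    also have "\<dots> = exp (1/2) * \<mu> * \<mu>"
      by (simp add: power2_eq_square exp_add[symmetric])
    also have "\<dots> \<le> 2 * (1/2) * \<mu>" using e12 hmu mu0
      by (intro mult_mono) auto
    finally show ?thesis using A B by simp
  qed
  moreover have S3: "(\<Sum>z\<in>ST n m. if ?k z \<noteq> 1 \<and> \<not> p * real (?k z) \<le> 1/4 then f z else 0) \<le> T"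
  proof -
    have "(\<Sum>z\<in>ST n m. if ?k z \<noteq> 1 \<and> \<not> p * real (?k z) \<le> 1/4 then f z else 0)
        \<le> (\<Sum>z\<in>ST n m. exp (- sqrt (real (n + m))))"
    proof (rule sum_mono)
      fix z assume z: "z \<in> ST n m"
      obtain s t where zst: "z = (s,t)" by fastforce
      have st: "s \<le> n" "t \<le> m" "2 * (s + t) \<le> n + m" using z zst unfolding ST_def by auto
      show "(if ?k z \<noteq> 1 \<and> \<not> p * real (?k z) \<le> 1/4 then f z else 0) \<le> exp (- sqrt (real (n + m)))"
      proof (cases "?k z \<noteq> 1 \<and> \<not> p * real (?k z) \<le> 1/4")
        case True
        hence "2 * exp 2 * sqrt (real (n + m)) \<le> real (s + t)" using hbig[of "s+t"] zst by simp
        hence "f z \<le> exp (- sqrt (real (n + m)))" unfolding f_def zst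
          using term_big[OF p mn st(1,2,3) hlog] m1 by simp
        thus ?thesis using True by simp
      next
        case False show ?thesis by (subst if_not_P[OF False]) simp
      qed
    qed
    also have "\<dots> = real (card (ST n m)) * exp (- sqrt (real (n + m)))" by simp
    also have "\<dots> \<le> real (n + m) ^ 2 * exp (- sqrt (real (n + m)))"
    proof -
      have "card (ST n m) \<le> card box" by (rule card_mono[OF finbox STbox])
      also have "card box = (n + 1) * (m + 1)" unfolding box_def by (simp add: card_cartesian_product)
      also have "\<dots> \<le> (n + m) ^ 2"
      proof -
        have a: "m \<le> m * m" using mult_le_mono2[of 1 m m] m1 by simp
        have b: "n \<le> n * n" using mult_le_mono2[of 1 n n] m1 mn by simp
        have c: "1 \<le> n * m" using mult_le_mono[of 1 n 1 m] m1 mn by simp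
        have d: "(n + 1) * (m + 1) = n * m + n + m + 1" by (simp add: algebra_simps)
        have e: "(n + m) ^ 2 = n * n + 2 * (n * m) + m * m" by (simp add: power2_eq_square algebra_simps)
        show ?thesis unfolding d e using a b c by linarith
      qed
      finally have "real (card (ST n m)) \<le> real (n + m) ^ 2" by (metis of_nat_le_iff of_nat_power)
      thus ?thesis by (simp add: mult_right_mono)
    qed
    finally show ?thesis using htail by simp
  qed
  ultimately show ?thesis unfolding f_def by linarith
qed


lemma ln_sqrt_eventually:
  fixes \<epsilon> :: real
  assumes "\<epsilon> > 0"
  shows "\<exists>M. \<forall>x\<ge>M. ln x \<le> \<epsilon> * sqrt x"
proof -
  have "((\<lambda>x::real. ln x / sqrt x) \<longlongrightarrow> 0) at_top" by real_asymp
  hence "eventually (\<lambda>x. ln x / sqrt x < \<epsilon>) at_top" using assms by (rule order_tendstoD)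
  moreover have "eventually (\<lambda>x::real. x > 0) at_top" by (rule eventually_gt_at_top)
  ultimately have "eventually (\<lambda>x. ln x \<le> \<epsilon> * sqrt x) at_top"
    by eventually_elim (auto simp: field_simps)
  thus ?thesis by (simp add: eventually_at_top_linorder)
qed


lemma prob_nonneg:
  fixes p :: real assumes "0 \<le> p" "p \<le> 1"
  shows "0 \<le> bip_one_component_prob n m p"
  unfolding bip_one_component_prob_def using assms by (intro sum_nonneg) auto

lemma instance_bound:
  fixes b c :: real and n m :: nat
  assumes b0: "b > 0" and m1: "1 \<le> m" and mn: "m \<le> n" and c0: "0 \<le> c"
    and kb: "(kappa n m)\<^sup>2 \<le> b"
    and N3: "3 \<le> real (n + m)"
    and he1: "ln (real (n + m)) * (8 * exp 2 * ((b + 1) * (b\<^sup>2 + 1))) \<le> sqrt (real (n + m))"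
    and he2: "ln (real (n + m)) * (2 + 2 * b) \<le> sqrt (real (n + m))"
    and he3: "ln (real (n + m)) * ((b + 1) * (b\<^sup>2 + 1)) \<le> sqrt (real (n + m))"
    and cN: "c \<le> ln (real (n + m))"
  shows "1 - 2 * exp (- c / (kappa n m)\<^sup>2) - 1 * real (n + m) powr (- 2 * b)
     \<le> bip_one_component_prob n m ((b * ln (real (n + m)) + c) / sqrt (real m * real n))"
proof -
  define N where "N = real (n + m)"
  define k2 where "k2 = (kappa n m)\<^sup>2"
  define p where "p = (b * ln N + c) / sqrt (real m * real n)"
  define \<mu> where "\<mu> = exp (- c / k2)"
  define B where "B = (b + 1) * (b\<^sup>2 + 1)"
  have rm: "1 \<le> real m" "real m \<le> real n" using m1 mn by auto
  have N0: "0 < N" and N1: "1 \<le> N" using N3 N_def by auto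
  have lnN: "0 < ln N" using N3 N_def by simp
  have sN: "sqrt N * sqrt N = N" using N0 by simp
  have k2eq: "k2 = sqrt (real n / real m)"
  proof -
    have "k2 = (real n / real m) powr (1/4) * (real n / real m) powr (1/4)"
      unfolding k2_def kappa_def by (simp add: power2_eq_square)
    also have "\<dots> = (real n / real m) powr (1/2)" by (simp add: powr_add[symmetric])
    also have "\<dots> = sqrt (real n / real m)" by (simp add: powr_half_sqrt)
    finally show ?thesis .
  qed
  have k21: "1 \<le> k2" unfolding k2eq using rm by simp
  have k2b: "k2 \<le> b" using kb k2_def by simp
  have nb: "real n \<le> b\<^sup>2 * real m"
  proof -
    have "real n / real m \<le> b\<^sup>2"
    proof -
      have "(sqrt (real n / real m))\<^sup>2 \<le> b\<^sup>2" using k2b unfolding k2eq by (intro power_mono) auto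
      thus ?thesis by simp
    qed
    thus ?thesis using rm by (simp add: field_simps)
  qed
  have smn: "sqrt (real m * real n) = k2 * real m"
  proof -
    have e: "sqrt (real m * real m) = real m" by simp
    have "sqrt (real m * real n) = sqrt (real n / real m * (real m * real m))"
      by (rule arg_cong[where f=sqrt]) (use rm in \<open>simp add: field_simps\<close>)
    also have "\<dots> = sqrt (real n / real m) * sqrt (real m * real m)" by (rule real_sqrt_mult)
    also have "\<dots> = k2 * real m" unfolding k2eq e ..
    finally show ?thesis .
  qed
  have pm: "p * real m = (b * ln N + c) / k2"
    unfolding p_def smn using rm k21 by (simp add: field_simps)
  have p0: "0 \<le> p" unfolding p_def using b0 lnN c0 by simp
  have pm2: "ln N + c / k2 \<le> p * real m"
  proof -
    have "ln N * 1 \<le> ln N * (b / k2)" using k2b k21 lnN by (intro mult_left_mono) (auto simp: field_simps)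
    thus ?thesis unfolding pm by (simp add: add_divide_distrib mult.commute)
  qed
  have hN: "N * exp (- p * real m) \<le> \<mu>"
  proof -
    have "exp (- p * real m) \<le> exp (- ln N - c / k2)" using pm2 by simp
    also have "\<dots> = \<mu> / N" unfolding \<mu>_def using N0 by (simp add: exp_diff exp_minus field_simps)
    finally show ?thesis using N0 by (simp add: field_simps)
  qed
  have hlog: "ln N \<le> p * real m"
  proof -
    have "0 \<le> c / k2" using c0 k21 by simp
    thus ?thesis using pm2 by linarith
  qed
  have pB: "p \<le> B * ln N / N"
  proof -
    have "p \<le> (b + 1) * ln N / (k2 * real m)"
      unfolding p_def smn using cN b0 rm k21 by (intro divide_right_mono) (auto simp: algebra_simps N_def)
    also have "\<dots> \<le> (b + 1) * ln N / real m"
      using k21 rm b0 lnN by (intro divide_left_mono) (auto simp: mult_le_cancel_right1)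
    also have "\<dots> \<le> (b + 1) * ln N * ((b\<^sup>2 + 1) / N)"
    proof -
      have "N \<le> (b\<^sup>2 + 1) * real m" unfolding N_def using nb by (simp add: algebra_simps)
      hence "1 / real m \<le> (b\<^sup>2 + 1) / N" using rm N0 by (simp add: field_simps)
      thus ?thesis using b0 lnN by (simp add: divide_inverse mult_left_mono)
    qed
    also have "\<dots> = B * ln N / N" unfolding B_def by simp
    finally show ?thesis .
  qed
  have B0: "0 < B" unfolding B_def using b0 by (simp add: add_pos_nonneg)
  have sNN: "sqrt N \<le> N"
  proof -
    have "sqrt N * 1 \<le> sqrt N * sqrt N" using N1 by (intro mult_left_mono) auto
    thus ?thesis using sN by simp
  qed
  have p1: "p \<le> 1"
  proof -
    have "B * ln N \<le> N" using he3 sNN unfolding B_def N_def by (simp add: mult.commute)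
    hence "B * ln N / N \<le> 1" using N0 by simp
    thus ?thesis using pB by linarith
  qed
  have hbig: "2 * exp 2 * sqrt N \<le> real k" if k: "1/4 < p * real k" for k :: nat
  proof -
    have "p * real k \<le> B * ln N / N * real k" using mult_right_mono[OF pB, of "real k"] by simp
    hence a: "N * (p * real k) \<le> B * ln N * real k" using N0 by (simp add: field_simps)
    have "N * (1/4) < N * (p * real k)" using k N0 by (intro mult_strict_left_mono)
    hence Y: "N < 4 * B * ln N * real k" using a by linarith
    have X: "(4 * B * ln N) * (2 * exp 2 * sqrt N) \<le> N"
    proof -
      have "(ln N * (8 * exp 2 * B)) * sqrt N \<le> sqrt N * sqrt N"
        using he1 unfolding B_def N_def by (intro mult_right_mono) auto
      thus ?thesis using sN by (simp add: algebra_simps)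
    qed
    have "(4 * B * ln N) * (2 * exp 2 * sqrt N) < (4 * B * ln N) * real k" by (rule le_less_trans[OF X Y])
    thus ?thesis using B0 lnN by (simp add: mult_less_cancel_left_pos mult_ac)
  qed
  have htail: "N ^ 2 * exp (- sqrt N) \<le> N powr (- 2 * b)"
  proof -
    have "N powr (2 + 2 * b) = exp ((2 + 2 * b) * ln N)" using N0 by (simp add: powr_def)
    also have "\<dots> \<le> exp (sqrt N)" using he2 unfolding N_def by (simp add: mult.commute)
    finally have a: "N powr (2 + 2 * b) \<le> exp (sqrt N)" .
    have e1: "N powr (- 2 * b) * N powr (2 + 2 * b) = N powr 2" by (simp add: powr_add[symmetric])
    have e2: "N powr 2 = N ^ 2" using N0 by simp
    have "N ^ 2 * exp (- sqrt N) = N powr (- 2 * b) * (N powr (2 + 2 * b) * exp (- sqrt N))"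
      unfolding mult.assoc[symmetric] e1 e2 ..
    also have "\<dots> \<le> N powr (- 2 * b) * 1"
    proof (rule mult_left_mono)
      have "N powr (2 + 2 * b) * exp (- sqrt N) \<le> exp (sqrt N) * exp (- sqrt N)"
        by (rule mult_right_mono[OF a]) simp
      also have "\<dots> = 1" by (simp add: exp_add[symmetric])
      finally show "N powr (2 + 2 * b) * exp (- sqrt N) \<le> 1" .
    qed simp
    finally show ?thesis by simp
  qed
  show ?thesis
  proof (cases "\<mu> \<le> 1/2")
    case True
    have "(\<Sum>(s,t)\<in>ST n m. real (n choose s) * real (m choose t) * (1-p) ^ (s * (m - t) + (n - s) * t))
       \<le> 2 * \<mu> + real (n + m) powr (- 2 * b)"
      by (rule sum_bound[OF m1 mn p0 p1 hN[unfolded N_def] True hlog[unfolded N_def]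
          hbig[unfolded N_def] htail[unfolded N_def]])
    moreover have "1 - (\<Sum>(s,t)\<in>ST n m. real (n choose s) * real (m choose t) * (1-p) ^ (s * (m - t) + (n - s) * t))
      \<le> bip_one_component_prob n m p" using prob_lower2[OF _ p0 p1] m1 mn by simp
    ultimately show ?thesis unfolding p_def \<mu>_def k2_def N_def by simp
  next
    case False
    have "0 \<le> bip_one_component_prob n m p" by (rule prob_nonneg[OF p0 p1])
    moreover have "0 \<le> N powr (- 2 * b)" by simp
    ultimately have "1 - 2 * \<mu> - 1 * N powr (- 2 * b) \<le> bip_one_component_prob n m p"
      using False by linarith
    thus ?thesis unfolding p_def \<mu>_def k2_def N_def .
  qed
qed


lemma main1:
  fixes b :: real
  assumes b0: "b > 0"
  shows "\<exists>M0. \<forall>n m c. M0 \<le> n \<and> M0 \<le> m \<and> m \<le> n \<and> 0 \<le> c \<and> c \<le> ln (real (n + m))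
            \<and> (kappa n m)\<^sup>2 \<le> b \<longrightarrow>
           1 - 2 * exp (- c / (kappa n m)\<^sup>2) - 1 * real (n + m) powr (- 2 * b)
             \<le> bip_one_component_prob n m ((b * ln (real (n + m)) + c) / sqrt (real m * real n))"
proof -
  define B where "B = (b + 1) * (b\<^sup>2 + 1)"
  have B0: "0 < B" unfolding B_def using b0 by (simp add: add_pos_nonneg)
  define \<epsilon> where "\<epsilon> = min (1 / (8 * exp 2 * B)) (min (1 / (2 + 2 * b)) (1 / B))"
  have e0: "0 < \<epsilon>" unfolding \<epsilon>_def using B0 b0 by simp
  obtain M where M: "\<And>x. x \<ge> M \<Longrightarrow> ln x \<le> \<epsilon> * sqrt x" using ln_sqrt_eventually[OF e0] by blast
  define M0 where "M0 = nat \<lceil>max M 3\<rceil>"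
  show ?thesis
  proof (intro exI[of _ M0] allI impI, elim conjE)
    fix n m :: nat and c :: real
    assume H: "M0 \<le> n" "M0 \<le> m" "m \<le> n" "0 \<le> c" "c \<le> ln (real (n + m))" "(kappa n m)\<^sup>2 \<le> b"
    have "max M 3 \<le> real M0" unfolding M0_def by linarith
    hence M0r: "M \<le> real M0" "3 \<le> real M0" by auto
    have Nge: "real M0 \<le> real (n + m)" using H(1) by simp
    have m1: "1 \<le> m" using H(2) M0r(2) by (metis Suc_le_eq le_trans not_less_eq_eq of_nat_le_iff of_nat_numeral
          nat_le_linear numeral_le_iff semiring_norm(70) order_trans[OF _ H(2)] less_one le_zero_eq not_one_le_zero One_nat_def
          of_nat_0 zero_less_one_class.zero_le_one)
    have N3: "3 \<le> real (n + m)" using M0r Nge by linarith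
    have lnle: "ln (real (n + m)) \<le> \<epsilon> * sqrt (real (n + m))" using M M0r Nge by force
    have lnN: "0 \<le> ln (real (n + m))" using N3 by simp
    have sq0: "0 \<le> sqrt (real (n + m))" by simp
    have gen: "ln (real (n + m)) * X \<le> sqrt (real (n + m))" if "0 < X" "\<epsilon> \<le> 1 / X" for X
    proof -
      have "ln (real (n + m)) \<le> (1 / X) * sqrt (real (n + m))"
        using lnle that sq0 by (meson mult_right_mono order_trans)
      thus ?thesis using that by (simp add: field_simps)
    qed
    have he1: "ln (real (n + m)) * (8 * exp 2 * ((b + 1) * (b\<^sup>2 + 1))) \<le> sqrt (real (n + m))"
      using gen[of "8 * exp 2 * B"] B0 unfolding \<epsilon>_def B_def by simp
    have he2: "ln (real (n + m)) * (2 + 2 * b) \<le> sqrt (real (n + m))"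
      using gen[of "2 + 2 * b"] b0 unfolding \<epsilon>_def by simp
    have he3: "ln (real (n + m)) * ((b + 1) * (b\<^sup>2 + 1)) \<le> sqrt (real (n + m))"
      using gen[of B] B0 unfolding \<epsilon>_def B_def by simp
    show "1 - 2 * exp (- c / (kappa n m)\<^sup>2) - 1 * real (n + m) powr (- 2 * b)
             \<le> bip_one_component_prob n m ((b * ln (real (n + m)) + c) / sqrt (real m * real n))"
      by (rule instance_bound[OF b0 m1 H(3) H(4) H(6) N3 he1 he2 he3 H(5)])
  qed
qed


theorem lemmaA1:
  fixes b :: real
  assumes "b > 0"
  shows "(\<exists>C M0. \<forall>n m c. M0 \<le> n \<and> M0 \<le> m \<and> m \<le> n \<and> 0 \<le> c \<and> c \<le> ln (real (n + m))
            \<and> (kappa n m)\<^sup>2 \<le> b \<longrightarrow>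
           1 - 2 * exp (- c / (kappa n m)\<^sup>2) - C * real (n + m) powr (- 2 * b)
             \<le> bip_one_component_prob n m ((b * ln (real (n + m)) + c) / sqrt (real m * real n)))
       \<and> (\<forall>\<epsilon>>0. \<exists>c0 M0. \<forall>n m c. M0 \<le> n \<and> M0 \<le> m \<and> m \<le> n \<and> c0 \<le> c \<and> 0 \<le> c
            \<and> c \<le> ln (real (n + m)) \<and> (kappa n m)\<^sup>2 \<le> b \<longrightarrow>
           1 - \<epsilon> \<le> bip_one_component_prob n m ((b * ln (real (n + m)) + c) / sqrt (real m * real n)))"
proof -
  obtain M0 where M0: "\<And>n m c. M0 \<le> n \<and> M0 \<le> m \<and> m \<le> n \<and> 0 \<le> c \<and> c \<le> ln (real (n + m))
            \<and> (kappa n m)\<^sup>2 \<le> b \<Longrightarrow>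
           1 - 2 * exp (- c / (kappa n m)\<^sup>2) - 1 * real (n + m) powr (- 2 * b)
             \<le> bip_one_component_prob n m ((b * ln (real (n + m)) + c) / sqrt (real m * real n))"
    using main1[OF assms] by blast
  have part1: "\<exists>C M0. \<forall>n m c. M0 \<le> n \<and> M0 \<le> m \<and> m \<le> n \<and> 0 \<le> c \<and> c \<le> ln (real (n + m))
            \<and> (kappa n m)\<^sup>2 \<le> b \<longrightarrow>
           1 - 2 * exp (- c / (kappa n m)\<^sup>2) - C * real (n + m) powr (- 2 * b)
             \<le> bip_one_component_prob n m ((b * ln (real (n + m)) + c) / sqrt (real m * real n))"
    using M0 by (intro exI[of _ 1] exI[of _ M0]) blast
  have part2: "\<exists>c0 M0. \<forall>n m c. M0 \<le> n \<and> M0 \<le> m \<and> m \<le> n \<and> c0 \<le> c \<and> 0 \<le> c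
            \<and> c \<le> ln (real (n + m)) \<and> (kappa n m)\<^sup>2 \<le> b \<longrightarrow>
           1 - \<epsilon> \<le> bip_one_component_prob n m ((b * ln (real (n + m)) + c) / sqrt (real m * real n))"
    if e: "\<epsilon> > 0" for \<epsilon> :: real
  proof -
    define c0 where "c0 = max 0 (b * ln (4 / \<epsilon>))"
    define M1 where "M1 = max M0 (nat \<lceil>2 / \<epsilon>\<rceil> + 1)"
    show ?thesis
    proof (intro exI[of _ c0] exI[of _ M1] allI impI, elim conjE)
      fix n m :: nat and c :: real
      assume H: "M1 \<le> n" "M1 \<le> m" "m \<le> n" "c0 \<le> c" "0 \<le> c" "c \<le> ln (real (n + m))" "(kappa n m)\<^sup>2 \<le> b"
      have main: "1 - 2 * exp (- c / (kappa n m)\<^sup>2) - 1 * real (n + m) powr (- 2 * b)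
             \<le> bip_one_component_prob n m ((b * ln (real (n + m)) + c) / sqrt (real m * real n))"
        using M0[of n m c] H M1_def by auto
      have m1: "1 \<le> m" using H(2) M1_def by simp
      have N2: "2 / \<epsilon> < real (n + m)"
      proof -
        have "2 / \<epsilon> \<le> real (nat \<lceil>2 / \<epsilon>\<rceil>)" by linarith
        also have "\<dots> < real M1" unfolding M1_def by simp
        also have "\<dots> \<le> real (n + m)" using H(1) by simp
        finally show ?thesis .
      qed
      have N1: "1 \<le> real (n + m)" using m1 by simp
      have k1: "1 \<le> kappa n m" unfolding kappa_def using m1 H(3)
        by (simp add: ge_one_powr_ge_zero)
      have k2: "1 \<le> (kappa n m)\<^sup>2" using k1 by (simp add: one_le_power)
      have b1: "1 \<le> b" using k2 H(7) by linarith
      have pos: "0 < b * (kappa n m)\<^sup>2" using b1 k2 by (intro mult_pos_pos) linarith+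
      have "c / b \<le> c / (kappa n m)\<^sup>2"
        using H(5) H(7) pos by (intro divide_left_mono) auto
      moreover have "ln (4 / \<epsilon>) \<le> c / b"
        using H(4) b1 unfolding c0_def by (simp add: field_simps)
      ultimately have "ln (4 / \<epsilon>) \<le> c / (kappa n m)\<^sup>2" by linarith
      hence "exp (- c / (kappa n m)\<^sup>2) \<le> exp (- ln (4 / \<epsilon>))" by simp
      also have "\<dots> = \<epsilon> / 4" using e by (simp add: exp_minus)
      finally have A: "exp (- c / (kappa n m)\<^sup>2) \<le> \<epsilon> / 4" .
      have "real (n + m) powr (- 2 * b) \<le> real (n + m) powr (- 1)"
        using N1 b1 by (intro powr_mono) auto
      also have "\<dots> = 1 / real (n + m)" using N1 by (simp add: powr_minus_divide)
      also have "\<dots> \<le> \<epsilon> / 2" using N2 e N1 by (simp add: field_simps)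
      finally have Bd: "real (n + m) powr (- 2 * b) \<le> \<epsilon> / 2" .
      show "1 - \<epsilon> \<le> bip_one_component_prob n m ((b * ln (real (n + m)) + c) / sqrt (real m * real n))"
        using main A Bd by linarith
    qed
  qed
  show ?thesis using part1 part2 by blast
qed


end
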